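(* Let $X$ be a geodesic metric space and let $\ell_1,\ell_2$ be two $N$-Morse geodesics in $X$ with $\ell_1(0)=\ell_2(0)=e$. Suppose there exists some $t_0$ such that $d(\ell_1(t),\ell_2(t))>4N(3,0)$ for all $t\ge t_0$, and fix such a $t_0$ with $d(\ell_1(t_0),\ell_2(t_0))\le 6N(3,0)$. Let $t_1,t_2\ge t_0$ (in the domains of $\ell_1,\ell_2$ respectively), and set $x_i=\ell_i(t_0)$, $y_i=\ell_i(t_i)$. Let $P$ be the path obtained by following $\ell_1$ from $y_1$ to $x_1$, then any geodesic from $x_1$ to $x_2$, then $\ell_2$ from $x_2$ to $y_2$. Then $P$ is a $(1,12N(3,0))$-quasi-geodesic. In particular \[d(y_1,y_2)\ge d(y_1,x_1)+d(x_1,x_2)+d(x_2,y_2)-12N(3,0).\]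
   Context: A Morse gauge is a function $N$ assigning to each $(K,C)$ ($K\ge1,C\ge0$) a number $N(K,C)\ge0$; a geodesic $\gamma$ is $N$-Morse if every $(K,C)$-quasi-geodesic with endpoints on $\gamma$ lies in the $N(K,C)$-neighbourhood of $\gamma$. A $(K,C)$-quasi-geodesic is a path $f$ with $K^{-1}|s-t|-C\le d(f(s),f(t))\le K|s-t|+C$. *)

theory Defs
  imports "HOL-Analysis.Analysis"
begin

definition geodesic_on :: "real set \<Rightarrow> (real \<Rightarrow> 'a::metric_space) \<Rightarrow> bool" where
  "geodesic_on D g \<longleftrightarrow> is_interval D \<and> D \<noteq> {} \<and>
     (\<forall>s\<in>D. \<forall>t\<in>D. dist (g s) (g t) = \<bar>s - t\<bar>)"

definition geodesic_space :: "'a::metric_space itself \<Rightarrow> bool" where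
  "geodesic_space _ \<longleftrightarrow> (\<forall>x y::'a. \<exists>g. geodesic_on {0..dist x y} g \<and> g 0 = x \<and> g (dist x y) = y)"

definition quasi_geodesic :: "real \<Rightarrow> real \<Rightarrow> (real \<Rightarrow> 'a::metric_space) \<Rightarrow> real \<Rightarrow> real \<Rightarrow> bool" where
  "quasi_geodesic K C f a b \<longleftrightarrow> a \<le> b \<and> continuous_on {a..b} f \<and>
     (\<forall>s\<in>{a..b}. \<forall>t\<in>{a..b}.
        \<bar>s - t\<bar> / K - C \<le> dist (f s) (f t) \<and> dist (f s) (f t) \<le> K * \<bar>s - t\<bar> + C)"

definition morse_gauge :: "(real \<Rightarrow> real \<Rightarrow> real) \<Rightarrow> bool" where
  "morse_gauge N \<longleftrightarrow> (\<forall>K C. K \<ge> 1 \<longrightarrow> C \<ge> 0 \<longrightarrow> N K C \<ge> 0)"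

definition N_Morse :: "(real \<Rightarrow> real \<Rightarrow> real) \<Rightarrow> real set \<Rightarrow> (real \<Rightarrow> 'a::metric_space) \<Rightarrow> bool" where
  "N_Morse N D \<gamma> \<longleftrightarrow> geodesic_on D \<gamma> \<and>
     (\<forall>K C f a b. K \<ge> 1 \<longrightarrow> C \<ge> 0 \<longrightarrow> quasi_geodesic K C f a b \<longrightarrow>
        f a \<in> \<gamma> ` D \<longrightarrow> f b \<in> \<gamma> ` D \<longrightarrow>
        (\<forall>s\<in>{a..b}. \<exists>u\<in>D. dist (f s) (\<gamma> u) \<le> N K C))"

definition concat_path :: "(real \<Rightarrow> 'a) \<Rightarrow> (real \<Rightarrow> 'a) \<Rightarrow> (real \<Rightarrow> 'a) \<Rightarrow> real \<Rightarrow> real \<Rightarrow> real \<Rightarrow> real \<Rightarrow> real \<Rightarrow> 'a" where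
  "concat_path l1 g l2 t0 t1 t2 d s =
     (if s \<le> t1 - t0 then l1 (t1 - s)
      else if s \<le> (t1 - t0) + d then g (s - (t1 - t0))
      else l2 (t0 + (s - (t1 - t0) - d)))"

end

theory Submission
  imports Defs
begin

lemma geo_dist: "geodesic_on D g \<Longrightarrow> s \<in> D \<Longrightarrow> t \<in> D \<Longrightarrow> dist (g s) (g t) = \<bar>s - t\<bar>"
  unfolding geodesic_on_def by blast

lemma geo_interval: "geodesic_on D g \<Longrightarrow> a \<in> D \<Longrightarrow> b \<in> D \<Longrightarrow> a \<le> x \<Longrightarrow> x \<le> b \<Longrightarrow> x \<in> D"
  unfolding geodesic_on_def is_interval_1 by blast

lemma lip_cont:
  fixes f :: "real \<Rightarrow> 'a::metric_space"
  assumes "\<forall>s\<in>S. \<forall>t\<in>S. dist (f s) (f t) \<le> \<bar>s - t\<bar>"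
  shows "continuous_on S f"
  unfolding continuous_on_iff
proof (intro ballI allI impI)
  fix x e :: real assume x: "x \<in> S" and e: "0 < e"
  show "\<exists>d>0. \<forall>x'\<in>S. dist x' x < d \<longrightarrow> dist (f x') (f x) < e"
  proof (intro exI[of _ e] conjI ballI impI)
    fix x' assume "x' \<in> S" "dist x' x < e"
    then show "dist (f x') (f x) < e" using assms x by (force simp: dist_real_def)
  qed (use e in auto)
qed

lemma geo_cont: "geodesic_on D g \<Longrightarrow> continuous_on D g"
  by (rule lip_cont) (simp add: geo_dist)

lemma geo_rev:
  assumes "geodesic_on {0..L} \<gamma>"
  shows "geodesic_on {0..L} (\<lambda>v. \<gamma> (L - v))"
proof -
  have "L \<ge> 0" using assms unfolding geodesic_on_def by auto
  then show ?thesis using assms unfolding geodesic_on_def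
    by (auto simp: is_interval_1)
qed

lemma proj_qg:
  fixes \<tau> \<gamma> :: "real \<Rightarrow> 'a::metric_space"
  assumes tau: "geodesic_on {0..h} \<tau>" and gam: "geodesic_on {0..L} \<gamma>"
    and v0: "0 \<le> v0" "v0 \<le> L" and eq: "\<tau> h = \<gamma> v0"
    and cl: "\<forall>v\<in>{0..L}. dist (\<tau> 0) (\<gamma> v0) \<le> dist (\<tau> 0) (\<gamma> v)"
  shows "quasi_geodesic 3 0 (\<lambda>s. if s \<le> h then \<tau> s else \<gamma> (v0 + (s - h))) 0 (h + (L - v0))"
proof -
  define f where "f = (\<lambda>s. if s \<le> h then \<tau> s else \<gamma> (v0 + (s - h)))"
  define T where "T = h + (L - v0)"
  have h0: "h \<ge> 0" using tau unfolding geodesic_on_def by auto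
  have key: "(t - s)/3 \<le> dist (f s) (f t) \<and> dist (f s) (f t) \<le> t - s"
    if st: "0 \<le> s" "s \<le> t" "t \<le> T" for s t
  proof (cases "t \<le> h")
    case True
    then show ?thesis using st geo_dist[OF tau, of s t] by (simp add: f_def)
  next
    case t: False
    show ?thesis
    proof (cases "s \<le> h")
      case s: True
      define w where "w = v0 + (t - h)"
      have w: "0 \<le> w" "w \<le> L" using v0 t st unfolding w_def T_def by auto
      have fs: "f s = \<tau> s" "f t = \<gamma> w" using s t by (auto simp: f_def w_def)
      have d1: "dist (\<tau> s) (\<tau> h) = h - s" using geo_dist[OF tau, of s h] s st h0 by simp
      have d2: "dist (\<gamma> v0) (\<gamma> w) = t - h" using geo_dist[OF gam, of v0 w] w v0 t by (simp add: w_def)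
      have d3: "dist (\<tau> 0) (\<tau> s) = s" using geo_dist[OF tau, of 0 s] s st h0 by simp
      have d4: "dist (\<tau> 0) (\<tau> h) = h" using geo_dist[OF tau, of 0 h] h0 by simp
      have c: "dist (\<tau> 0) (\<gamma> v0) \<le> dist (\<tau> 0) (\<gamma> w)" using cl w by auto
      have t1: "dist (\<tau> s) (\<gamma> w) \<le> dist (\<tau> s) (\<tau> h) + dist (\<tau> h) (\<gamma> w)" by (rule dist_triangle)
      have t2: "dist (\<tau> 0) (\<gamma> w) \<le> dist (\<tau> 0) (\<tau> s) + dist (\<tau> s) (\<gamma> w)" by (rule dist_triangle)
      have t3: "dist (\<tau> h) (\<gamma> w) \<le> dist (\<tau> h) (\<tau> s) + dist (\<tau> s) (\<gamma> w)" by (rule dist_triangle)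
      have sym: "dist (\<tau> h) (\<tau> s) = dist (\<tau> s) (\<tau> h)" by (rule dist_commute)
      show ?thesis unfolding fs using d1 d2 d3 d4 c t1 t2 t3 sym eq by (simp; linarith)
    next
      case s: False
      have fs: "f s = \<gamma> (v0 + (s - h))" "f t = \<gamma> (v0 + (t - h))" using s t by (auto simp: f_def)
      show ?thesis unfolding fs using geo_dist[OF gam, of "v0 + (s - h)" "v0 + (t - h)"] s t st v0
        by (simp add: T_def)
    qed
  qed
  have all: "\<bar>s - t\<bar>/3 \<le> dist (f s) (f t) \<and> dist (f s) (f t) \<le> \<bar>s - t\<bar>"
    if "s \<in> {0..T}" "t \<in> {0..T}" for s t
  proof (cases "s \<le> t")
    case True then show ?thesis using key[of s t] that by simp
  next
    case False then show ?thesis using key[of t s] that by (simp add: dist_commute)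
  qed
  have "continuous_on {0..T} f" by (rule lip_cont) (use all in blast)
  moreover have "0 \<le> T" using h0 v0 by (simp add: T_def)
  ultimately show ?thesis using all unfolding quasi_geodesic_def f_def[symmetric] T_def[symmetric]
    by (auto; smt (verit) )
qed


lemma key_lemma:
  fixes N :: "real \<Rightarrow> real \<Rightarrow> real" and l1 l2 :: "real \<Rightarrow> 'a::metric_space"
  assumes gs: "geodesic_space TYPE('a)"
    and D1: "D1 \<subseteq> {0..}" "0 \<in> D1" and D2: "D2 \<subseteq> {0..}" "0 \<in> D2"
    and M1: "N_Morse N D1 l1" and M2: "N_Morse N D2 l2"
    and e: "l1 0 = l2 0"
    and hyp: "\<forall>t \<in> D1 \<inter> D2. t \<ge> t0 \<longrightarrow> dist (l1 t) (l2 t) > 4 * N 3 0"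
    and p: "p \<in> D1" and r: "r \<in> D2"
  shows "dist (l1 p) (l2 r) \<ge> p + r - 2 * t0 - 4 * N 3 0"
proof -
  define n where "n = N 3 0"
  have G1: "geodesic_on D1 l1" using M1 unfolding N_Morse_def by auto
  have G2: "geodesic_on D2 l2" using M2 unfolding N_Morse_def by auto
  define L where "L = dist (l1 p) (l2 r)"
  obtain \<gamma> where gam: "geodesic_on {0..L} \<gamma>" "\<gamma> 0 = l1 p" "\<gamma> L = l2 r"
    using gs unfolding geodesic_space_def L_def by blast
  have L0: "L \<ge> 0" by (simp add: L_def)
  have "\<exists>v0\<in>{0..L}. \<forall>v\<in>{0..L}. dist (l1 0) (\<gamma> v0) \<le> dist (l1 0) (\<gamma> v)"
    by (rule continuous_attains_inf) (use L0 geo_cont[OF gam(1)] in \<open>auto intro!: continuous_intros\<close>)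
  then obtain v0 where v0: "0 \<le> v0" "v0 \<le> L"
    and cl: "\<forall>v\<in>{0..L}. dist (l1 0) (\<gamma> v0) \<le> dist (l1 0) (\<gamma> v)" by auto
  define h where "h = dist (l1 0) (\<gamma> v0)"
  obtain \<tau> where tau: "geodesic_on {0..h} \<tau>" "\<tau> 0 = l1 0" "\<tau> h = \<gamma> v0"
    using gs unfolding geodesic_space_def h_def by blast
  have q2: "quasi_geodesic 3 0 (\<lambda>s. if s \<le> h then \<tau> s else \<gamma> (v0 + (s - h))) 0 (h + (L - v0))"
    by (rule proj_qg[OF tau(1) gam(1) v0 tau(3)]) (use cl tau(2) in auto)
  have e2: "(\<lambda>s. if s \<le> h then \<tau> s else \<gamma> (v0 + (s - h))) (h + (L - v0)) = l2 r"
    using tau(3) gam(3) v0 by auto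
  have s02: "(\<lambda>s. if s \<le> h then \<tau> s else \<gamma> (v0 + (s - h))) 0 = l2 0"
    using tau(2) e h_def by auto
  have h0: "h \<ge> 0" by (simp add: h_def)
  obtain \<beta> where \<beta>: "\<beta> \<in> D2" "dist (\<gamma> v0) (l2 \<beta>) \<le> n"
  proof -
    have mm: "\<And>f a b. quasi_geodesic 3 0 f a b \<Longrightarrow> f a \<in> l2 ` D2 \<Longrightarrow> f b \<in> l2 ` D2 \<Longrightarrow> \<forall>s\<in>{a..b}. \<exists>u\<in>D2. dist (f s) (l2 u) \<le> N 3 0"
      using M2 unfolding N_Morse_def by auto
    have "\<forall>s\<in>{0..h + (L - v0)}. \<exists>u\<in>D2. dist ((\<lambda>s. if s \<le> h then \<tau> s else \<gamma> (v0 + (s - h))) s) (l2 u) \<le> N 3 0"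
      by (rule mm[OF q2]) (simp_all only: e2 s02 imageI D2(2) r)
    then obtain u where "u \<in> D2" "dist ((\<lambda>s. if s \<le> h then \<tau> s else \<gamma> (v0 + (s - h))) h) (l2 u) \<le> N 3 0"
      using h0 v0 by fastforce
    then show ?thesis using that tau(3) n_def by auto
  qed
  have q1: "quasi_geodesic 3 0 (\<lambda>s. if s \<le> h then \<tau> s else (\<lambda>v. \<gamma> (L - v)) ((L - v0) + (s - h))) 0 (h + (L - (L - v0)))"
    by (rule proj_qg[OF tau(1) geo_rev[OF gam(1)]]) (use cl tau v0 in auto)
  have e1: "(\<lambda>s. if s \<le> h then \<tau> s else (\<lambda>v. \<gamma> (L - v)) ((L - v0) + (s - h))) (h + (L - (L - v0))) = l1 p"
    using tau(3) gam(2) v0 by auto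
  have s01: "(\<lambda>s. if s \<le> h then \<tau> s else (\<lambda>v. \<gamma> (L - v)) ((L - v0) + (s - h))) 0 = l1 0"
    using tau(2) h_def by auto
  obtain \<alpha> where \<alpha>: "\<alpha> \<in> D1" "dist (\<gamma> v0) (l1 \<alpha>) \<le> n"
  proof -
    have mm: "\<And>f a b. quasi_geodesic 3 0 f a b \<Longrightarrow> f a \<in> l1 ` D1 \<Longrightarrow> f b \<in> l1 ` D1 \<Longrightarrow> \<forall>s\<in>{a..b}. \<exists>u\<in>D1. dist (f s) (l1 u) \<le> N 3 0"
      using M1 unfolding N_Morse_def by auto
    have "\<forall>s\<in>{0..h + (L - (L - v0))}. \<exists>u\<in>D1. dist ((\<lambda>s. if s \<le> h then \<tau> s else (\<lambda>v. \<gamma> (L - v)) ((L - v0) + (s - h))) s) (l1 u) \<le> N 3 0"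
      by (rule mm[OF q1]) (simp_all only: e1 s01 imageI D1(2) p)
    then obtain u where "u \<in> D1" "dist ((\<lambda>s. if s \<le> h then \<tau> s else (\<lambda>v. \<gamma> (L - v)) ((L - v0) + (s - h))) h) (l1 u) \<le> N 3 0"
      using h0 v0 by fastforce
    then show ?thesis using that tau(3) n_def by auto
  qed
  have a0: "\<alpha> \<ge> 0" using \<alpha> D1 by auto
  have b0: "\<beta> \<ge> 0" using \<beta> D2 by auto
  have da: "dist (l1 0) (l1 \<alpha>) = \<alpha>" using geo_dist[OF G1 D1(2) \<alpha>(1)] a0 by simp
  have db: "dist (l2 0) (l2 \<beta>) = \<beta>" using geo_dist[OF G2 D2(2) \<beta>(1)] b0 by simp
  have tri1: "dist (l1 0) (l1 \<alpha>) \<le> dist (l1 0) (l2 \<beta>) + dist (l2 \<beta>) (\<gamma> v0) + dist (\<gamma> v0) (l1 \<alpha>)"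
    using dist_triangle[of "l1 0" "l1 \<alpha>" "l2 \<beta>"] dist_triangle[of "l2 \<beta>" "l1 \<alpha>" "\<gamma> v0"] by linarith
  have tri2: "dist (l2 0) (l2 \<beta>) \<le> dist (l2 0) (l1 \<alpha>) + dist (l1 \<alpha>) (\<gamma> v0) + dist (\<gamma> v0) (l2 \<beta>)"
    using dist_triangle[of "l2 0" "l2 \<beta>" "l1 \<alpha>"] dist_triangle[of "l1 \<alpha>" "l2 \<beta>" "\<gamma> v0"] by linarith
  have ab: "\<bar>\<alpha> - \<beta>\<bar> \<le> 2 * n"
    using tri1 tri2 da db e \<alpha> \<beta> by (simp add: dist_commute)
  define c where "c = min \<alpha> \<beta>"
  have c1: "c \<in> D1" using geo_interval[OF G1 D1(2) \<alpha>(1), of c] a0 b0 by (auto simp: c_def)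
  have c2: "c \<in> D2" using geo_interval[OF G2 D2(2) \<beta>(1), of c] a0 b0 by (auto simp: c_def)
  have dc1: "dist (l1 c) (l1 \<alpha>) = \<alpha> - c" using geo_dist[OF G1 c1 \<alpha>(1)] by (simp add: c_def)
  have dc2: "dist (l2 \<beta>) (l2 c) = \<beta> - c" using geo_dist[OF G2 \<beta>(1) c2] by (simp add: c_def)
  have tri3: "dist (l1 c) (l2 c) \<le> dist (l1 c) (l1 \<alpha>) + dist (l1 \<alpha>) (\<gamma> v0) + dist (\<gamma> v0) (l2 \<beta>) + dist (l2 \<beta>) (l2 c)"
    using dist_triangle[of "l1 c" "l2 c" "l1 \<alpha>"] dist_triangle[of "l1 \<alpha>" "l2 c" "\<gamma> v0"] dist_triangle[of "\<gamma> v0" "l2 c" "l2 \<beta>"] by linarith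
  have sum: "\<alpha> + \<beta> = 2 * c + \<bar>\<alpha> - \<beta>\<bar>" by (auto simp: c_def min_def)
  have "dist (l1 c) (l2 c) \<le> 4 * n"
    using tri3 dc1 dc2 \<alpha> \<beta> ab sum by (simp add: dist_commute)
  then have ct: "c < t0" using hyp c1 c2 n_def by (meson IntI linorder_not_le not_less)
  have Lsplit: "L = dist (\<gamma> 0) (\<gamma> v0) + dist (\<gamma> v0) (\<gamma> L)"
    using geo_dist[OF gam(1), of 0 v0] geo_dist[OF gam(1), of v0 L] v0 by simp
  have pa: "dist (l1 p) (l1 \<alpha>) \<ge> p - \<alpha>" using geo_dist[OF G1 p \<alpha>(1)] by simp
  have rb: "dist (l2 \<beta>) (l2 r) \<ge> r - \<beta>" using geo_dist[OF G2 \<beta>(1) r] by simp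
  have tri4: "dist (l1 p) (l1 \<alpha>) \<le> dist (l1 p) (\<gamma> v0) + dist (\<gamma> v0) (l1 \<alpha>)" by (rule dist_triangle)
  have tri5: "dist (l2 \<beta>) (l2 r) \<le> dist (l2 \<beta>) (\<gamma> v0) + dist (\<gamma> v0) (l2 r)" by (rule dist_triangle)
  have "L \<ge> p + r - 2 * t0 - 4 * n"
    using Lsplit gam pa rb tri4 tri5 \<alpha> \<beta> ab sum ct by (simp add: dist_commute)
  then show ?thesis by (simp add: L_def n_def)
qed


theorem lemma3p4:
  fixes N :: "real \<Rightarrow> real \<Rightarrow> real"
    and l1 l2 g :: "real \<Rightarrow> 'a::metric_space"
    and D1 D2 :: "real set" and e :: 'a and t0 t1 t2 :: real
  assumes "geodesic_space TYPE('a)"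
    and "morse_gauge N"
    and "0 \<in> D1" "D1 \<subseteq> {0..}" "0 \<in> D2" "D2 \<subseteq> {0..}"
    and "N_Morse N D1 l1" "N_Morse N D2 l2"
    and "l1 0 = e" "l2 0 = e"
    and "t0 \<in> D1" "t0 \<in> D2"
    and "\<forall>t \<in> D1 \<inter> D2. t \<ge> t0 \<longrightarrow> dist (l1 t) (l2 t) > 4 * N 3 0"
    and "dist (l1 t0) (l2 t0) \<le> 6 * N 3 0"
    and "t1 \<in> D1" "t1 \<ge> t0" "t2 \<in> D2" "t2 \<ge> t0"
    and "geodesic_on {0..dist (l1 t0) (l2 t0)} g"
    and "g 0 = l1 t0" "g (dist (l1 t0) (l2 t0)) = l2 t0"
  shows "quasi_geodesic 1 (12 * N 3 0)
           (concat_path l1 g l2 t0 t1 t2 (dist (l1 t0) (l2 t0))) 0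
           ((t1 - t0) + dist (l1 t0) (l2 t0) + (t2 - t0))
       \<and> dist (l1 t1) (l2 t2) \<ge>
           dist (l1 t1) (l1 t0) + dist (l1 t0) (l2 t0) + dist (l2 t0) (l2 t2) - 12 * N 3 0"
proof -
  note A = assms
  define n where "n = N 3 0"
  have n0: "n \<ge> 0" using A(2) unfolding morse_gauge_def n_def by auto
  define d where "d = dist (l1 t0) (l2 t0)"
  have dn: "d \<le> 6 * n" using A(14) by (simp add: d_def n_def)
  have d0: "d \<ge> 0" by (simp add: d_def)
  have G1: "geodesic_on D1 l1" using A(7) unfolding N_Morse_def by auto
  have G2: "geodesic_on D2 l2" using A(8) unfolding N_Morse_def by auto
  have G: "geodesic_on {0..d} g" using A(19) by (simp add: d_def)
  have g0: "g 0 = l1 t0" and gd: "g d = l2 t0" using A(20,21) by (simp_all add: d_def)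
  have e12: "l1 0 = l2 0" using A(9,10) by simp
  have K: "\<And>p r. p \<in> D1 \<Longrightarrow> r \<in> D2 \<Longrightarrow> dist (l1 p) (l2 r) \<ge> p + r - 2 * t0 - 4 * n"
    using key_lemma[OF A(1) A(4) A(3) A(6) A(5) A(7) A(8) e12 A(13)] n_def by blast
  have in1: "\<And>p. t0 \<le> p \<Longrightarrow> p \<le> t1 \<Longrightarrow> p \<in> D1" using geo_interval[OF G1 A(11) A(15)] by blast
  have in2: "\<And>p. t0 \<le> p \<Longrightarrow> p \<le> t2 \<Longrightarrow> p \<in> D2" using geo_interval[OF G2 A(12) A(17)] by blast
  define a1 where "a1 = t1 - t0"
  define T where "T = a1 + d + (t2 - t0)"
  define P where "P = concat_path l1 g l2 t0 t1 t2 d"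
  have P1: "\<And>s. s \<le> a1 \<Longrightarrow> P s = l1 (t1 - s)" by (simp add: P_def concat_path_def a1_def)
  have P2: "\<And>s. a1 < s \<Longrightarrow> s \<le> a1 + d \<Longrightarrow> P s = g (s - a1)" by (simp add: P_def concat_path_def a1_def)
  have P3: "\<And>s. a1 + d < s \<Longrightarrow> P s = l2 (t0 + (s - a1 - d))" using d0 by (simp add: P_def concat_path_def a1_def)
  have a10: "a1 \<ge> 0" using A(16) by (simp add: a1_def)
  have main: "t - s - 12 * n \<le> dist (P s) (P t) \<and> dist (P s) (P t) \<le> t - s"
    if st: "0 \<le> s" "s \<le> t" "t \<le> T" for s t
  proof (cases "s \<le> a1")
    case s1: True
    define p where "p = t1 - s"
    have p: "p \<in> D1" "t0 \<le> p" "p \<le> t1" using in1 s1 st by (auto simp: p_def a1_def)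
    have Ps: "P s = l1 p" using P1[OF s1] by (simp add: p_def)
    have dp0: "dist (l1 p) (l1 t0) = p - t0" using geo_dist[OF G1 p(1) A(11)] p by simp
    show ?thesis
    proof (cases "t \<le> a1")
      case True
      define q where "q = t1 - t"
      have q: "q \<in> D1" using in1 True st by (auto simp: q_def a1_def)
      show ?thesis using P1[OF True] Ps geo_dist[OF G1 p(1) q] st n0 by (simp add: q_def p_def)
    next
      case t1': False
      show ?thesis
      proof (cases "t \<le> a1 + d")
        case True
        define q where "q = t - a1"
        have q: "q \<in> {0..d}" "0 \<le> q" "q \<le> d" using True t1' by (auto simp: q_def)
        have Pt: "P t = g q" using P2 t1' True by (simp add: q_def)
        have dq: "dist (g 0) (g q) = q" using geo_dist[OF G, of 0 q] q d0 by simp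
        have tr1: "dist (l1 p) (g q) \<le> dist (l1 p) (l1 t0) + dist (g 0) (g q)"
          using dist_triangle[of "l1 p" "g q" "g 0"] g0 by simp
        have tr2: "dist (l1 p) (l1 t0) \<le> dist (l1 p) (g q) + dist (g 0) (g q)"
          using dist_triangle[of "l1 p" "g 0" "g q"] g0 by (simp add: dist_commute)
        show ?thesis unfolding Ps Pt using tr1 tr2 dq dp0 q dn n0 by (simp add: p_def q_def a1_def; linarith)
      next
        case False
        define r where "r = t0 + (t - a1 - d)"
        have r: "r \<in> D2" "t0 \<le> r" using in2 False st by (auto simp: r_def T_def)
        have Pt: "P t = l2 r" using P3 False by (simp add: r_def)
        have dr: "dist (l2 t0) (l2 r) = r - t0" using geo_dist[OF G2 A(12) r(1)] r by simp
        have tr: "dist (l1 p) (l2 r) \<le> dist (l1 p) (l1 t0) + dist (l1 t0) (l2 t0) + dist (l2 t0) (l2 r)"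
          using dist_triangle[of "l1 p" "l2 r" "l1 t0"] dist_triangle[of "l1 t0" "l2 r" "l2 t0"] by linarith
        show ?thesis unfolding Ps Pt using tr K[OF p(1) r(1)] dr dp0 dn n0
          by (simp add: p_def r_def a1_def d_def[symmetric]; linarith)
      qed
    qed
  next
    case s1: False
    show ?thesis
    proof (cases "s \<le> a1 + d")
      case s2: True
      define q where "q = s - a1"
      have q: "q \<in> {0..d}" "0 \<le> q" "q \<le> d" using s1 s2 by (auto simp: q_def)
      have Ps: "P s = g q" using P2 s1 s2 by (simp add: q_def)
      show ?thesis
      proof (cases "t \<le> a1 + d")
        case True
        define q' where "q' = t - a1"
        have q': "q' \<in> {0..d}" using True st s1 by (auto simp: q'_def)
        have Pt: "P t = g q'" using P2 True st s1 by (simp add: q'_def)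
        show ?thesis unfolding Ps Pt using geo_dist[OF G q(1) q'] st n0 by (simp add: q_def q'_def)
      next
        case False
        define r where "r = t0 + (t - a1 - d)"
        have r: "r \<in> D2" "t0 \<le> r" using in2 False st by (auto simp: r_def T_def)
        have Pt: "P t = l2 r" using P3 False by (simp add: r_def)
        have dr: "dist (l2 t0) (l2 r) = r - t0" using geo_dist[OF G2 A(12) r(1)] r by simp
        have dq: "dist (g q) (g d) = d - q" using geo_dist[OF G q(1), of d] q d0 by simp
        have tr1: "dist (g q) (l2 r) \<le> dist (g q) (g d) + dist (l2 t0) (l2 r)"
          using dist_triangle[of "g q" "l2 r" "g d"] gd by simp
        have tr2: "dist (l2 t0) (l2 r) \<le> dist (g q) (g d) + dist (g q) (l2 r)"
          using dist_triangle[of "g d" "l2 r" "g q"] gd by (simp add: dist_commute)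
        show ?thesis unfolding Ps Pt using tr1 tr2 dq dr q dn n0 by (simp add: r_def q_def; linarith)
      qed
    next
      case s2: False
      have t2': "a1 + d < t" using s2 st by simp
      define r where "r = t0 + (s - a1 - d)"
      define r' where "r' = t0 + (t - a1 - d)"
      have r: "r \<in> D2" using in2 s2 st by (auto simp: r_def T_def)
      have r': "r' \<in> D2" using in2 t2' st by (auto simp: r'_def T_def)
      show ?thesis using P3[OF s2[unfolded not_le]] P3[OF t2'] geo_dist[OF G2 r r'] st n0
        by (simp add: r_def r'_def)
    qed
  qed
  have all: "\<bar>s - t\<bar> - 12 * n \<le> dist (P s) (P t) \<and> dist (P s) (P t) \<le> \<bar>s - t\<bar>"
    if "s \<in> {0..T}" "t \<in> {0..T}" for s t
  proof (cases "s \<le> t")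
    case True then show ?thesis using main[of s t] that by simp
  next
    case False then show ?thesis using main[of t s] that by (simp add: dist_commute)
  qed
  have cont: "continuous_on {0..T} P" by (rule lip_cont) (use all in blast)
  have T0: "0 \<le> T" using a10 d0 A(18) by (simp add: T_def)
  have qg: "quasi_geodesic 1 (12 * n) P 0 T"
    unfolding quasi_geodesic_def using T0 cont all n0 by (auto; smt (verit))
  have K2: "dist (l1 t1) (l2 t2) \<ge> t1 + t2 - 2 * t0 - 4 * n" using K[OF A(15) A(17)] .
  have x1: "dist (l1 t1) (l1 t0) = t1 - t0" using geo_dist[OF G1 A(15) A(11)] A(16) by simp
  have x2: "dist (l2 t0) (l2 t2) = t2 - t0" using geo_dist[OF G2 A(12) A(17)] A(18) by simp
  show ?thesis using qg K2 x1 x2 dn n0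
    by (simp add: P_def T_def a1_def n_def d_def)
qed

end
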